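(* Let $g:\mathbb{R}^d\to\mathbb{R}$ be $\alpha$-strongly convex and $\beta$-smooth (twice differentiable), let $f\equiv0$, and let $\eta>0$. Let $\pi_\eta^X$ be the $X$-marginal of $\pi_\eta^{XY}\propto\exp[-g(y)-\frac1{2\eta}\|x-y\|_2^2]$ on $\mathbb{R}^d\times\mathbb{R}^d$, and $\nu\propto\exp(-g)$ (so $\pi_\eta^X=\nu*\mathcal N(0,\eta\mathbf I)$). Then $$D_{\mathrm{KL}}(\pi_\eta^X\|\nu)\le\frac{d\alpha}{2\beta}\Big[\exp\Big(\frac{2\beta^2\eta}{\alpha}\Big)-1\Big],\qquad \mathrm{TV}(\pi_\eta^X,\nu)\le\sqrt{\frac{d\alpha}{4\beta}\Big[\exp\Big(\frac{2\beta^2\eta}{\alpha}\Big)-1\Big]}.$$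
   Context: $g$ is $\beta$-smooth if $g(x)-g(y)\le\nabla g(y)^T(x-y)+\frac\beta2\|x-y\|_2^2$ for all $x,y$; $\alpha$-strongly convex if $g(x)-g(y)\ge\nabla g(y)^T(x-y)+\frac\alpha2\|x-y\|_2^2$. $D_{\mathrm{KL}}(\mu\|\nu)=\int\mu\log\frac\mu\nu$; $\mathrm{TV}(\mu,\nu)=\frac12\|\mu-\nu\|_1$. *)

theory Defs
  imports "HOL-Analysis.Analysis"
begin

definition beta_smooth :: "('a::euclidean_space \<Rightarrow> real) \<Rightarrow> ('a \<Rightarrow> 'a) \<Rightarrow> real \<Rightarrow> bool" where
  "beta_smooth g grad \<beta> \<longleftrightarrow>
     (\<forall>x y. g x - g y \<le> grad y \<bullet> (x - y) + \<beta> / 2 * (norm (x - y))\<^sup>2)"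

definition strongly_convex :: "('a::euclidean_space \<Rightarrow> real) \<Rightarrow> ('a \<Rightarrow> 'a) \<Rightarrow> real \<Rightarrow> bool" where
  "strongly_convex g grad \<alpha> \<longleftrightarrow>
     (\<forall>x y. g x - g y \<ge> grad y \<bullet> (x - y) + \<alpha> / 2 * (norm (x - y))\<^sup>2)"

definition gibbs_density :: "('a::euclidean_space \<Rightarrow> real) \<Rightarrow> 'a \<Rightarrow> real" where
  "gibbs_density g x = exp (- g x) / (LINT z|lborel. exp (- g z))"

definition joint_weight :: "('a::euclidean_space \<Rightarrow> real) \<Rightarrow> real \<Rightarrow> 'a \<Rightarrow> 'a \<Rightarrow> real" where
  "joint_weight g \<eta> x y = exp (- g y - (norm (x - y))\<^sup>2 / (2 * \<eta>))"

definition X_marginal_density :: "('a::euclidean_space \<Rightarrow> real) \<Rightarrow> real \<Rightarrow> 'a \<Rightarrow> real" where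
  "X_marginal_density g \<eta> x =
     (LINT y|lborel. joint_weight g \<eta> x y) /
     (LINT x'|lborel. (LINT y|lborel. joint_weight g \<eta> x' y))"

definition KL_dens :: "('a::euclidean_space \<Rightarrow> real) \<Rightarrow> ('a \<Rightarrow> real) \<Rightarrow> real" where
  "KL_dens p q = (LINT x|lborel. p x * ln (p x / q x))"

definition TV_dens :: "('a::euclidean_space \<Rightarrow> real) \<Rightarrow> ('a \<Rightarrow> real) \<Rightarrow> real" where
  "TV_dens p q = (1/2) * (LINT x|lborel. \<bar>p x - q x\<bar>)"

end

theory Submission
  imports Defs "HOL-Probability.Probability"
begin


definition gam :: "real \<Rightarrow> 'a::euclidean_space \<Rightarrow> real" where
  "gam t z = (\<Prod>b\<in>Basis. normal_density 0 (sqrt t) (z \<bullet> b))"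

lemma gam_nonneg: "0 \<le> gam t z"
  by (simp add: gam_def prod_nonneg)

lemma gam_pos: "0 < t \<Longrightarrow> 0 < gam t z"
  by (simp add: gam_def prod_pos normal_density_pos)

lemma gam_meas[measurable]: "gam t \<in> borel_measurable borel"
  unfolding gam_def by measurable

lemma nd_nn1: "0 < t \<Longrightarrow> (\<integral>\<^sup>+x. ennreal (normal_density 0 (sqrt t) x) \<partial>lborel) = 1"
  by (subst nn_integral_eq_integral) auto

lemma nd_nn2: assumes "0 < t"
  shows "(\<integral>\<^sup>+x. ennreal (normal_density 0 (sqrt t) x * x^2) \<partial>lborel) = ennreal t"
proof -
  have "integrable lborel (\<lambda>x. normal_density 0 (sqrt t) x * x^2)"
    using integrable_normal_moment[of "sqrt t" 0 2] assms by simp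
  moreover have "integral\<^sup>L lborel (\<lambda>x. normal_density 0 (sqrt t) x * x^2) = t"
    using integral_normal_moment_even[of "sqrt t" 0 1] assms by (simp add: power2_eq_square)
  ultimately show ?thesis by (subst nn_integral_eq_integral) auto
qed

lemma gam_nn1: assumes "0 < t" shows "(\<integral>\<^sup>+z. ennreal (gam t (z::'a::euclidean_space)) \<partial>lborel) = 1"
proof -
  have "(\<integral>\<^sup>+z. ennreal (gam t (z::'a)) \<partial>lborel) = (\<integral>\<^sup>+(z::'a). (\<Prod>b\<in>Basis. ennreal (normal_density 0 (sqrt t) (z \<bullet> b))) \<partial>lborel)"
    by (simp add: gam_def prod_ennreal prod_nonneg)
  also have "\<dots> = (\<Prod>b\<in>(Basis::'a set). (\<integral>\<^sup>+x. ennreal (normal_density 0 (sqrt t) x) \<partial>lborel))"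
    by (rule nn_integral_lborel_prod) auto
  also have "\<dots> = 1" using assms by (simp add: nd_nn1)
  finally show ?thesis .
qed

lemma gam_nn2: assumes "0 < t" and b0: "b0 \<in> Basis"
  shows "(\<integral>\<^sup>+z. ennreal (gam t (z::'a::euclidean_space) * (z \<bullet> b0)^2) \<partial>lborel) = ennreal t"
proof -
  define f where "f = (\<lambda>b x. if b = b0 then ennreal (normal_density 0 (sqrt t) x * x^2) else ennreal (normal_density 0 (sqrt t) x))"
  have "(\<integral>\<^sup>+z. ennreal (gam t (z::'a) * (z \<bullet> b0)^2) \<partial>lborel) = (\<integral>\<^sup>+(z::'a). (\<Prod>b\<in>Basis. f b (z \<bullet> b)) \<partial>lborel)"
  proof (rule nn_integral_cong)
    fix z :: 'a
    have "(\<Prod>b\<in>Basis. f b (z \<bullet> b)) = f b0 (z \<bullet> b0) * (\<Prod>b\<in>Basis - {b0}. f b (z \<bullet> b))"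
      using b0 by (simp add: prod.remove)
    also have "\<dots> = ennreal (normal_density 0 (sqrt t) (z\<bullet>b0) * (z\<bullet>b0)^2) * (\<Prod>b\<in>Basis - {b0}. ennreal (normal_density 0 (sqrt t) (z \<bullet> b)))"
      by (simp add: f_def)
    also have "\<dots> = ennreal (gam t z * (z \<bullet> b0)^2)"
      using b0 by (simp add: gam_def prod.remove prod_ennreal ennreal_mult[symmetric] prod_nonneg mult_ac)
    finally show "ennreal (gam t z * (z \<bullet> b0)^2) = (\<Prod>b\<in>Basis. f b (z \<bullet> b))" by simp
  qed
  also have "\<dots> = (\<Prod>b\<in>(Basis::'a set). (\<integral>\<^sup>+x. f b x \<partial>lborel))"
    by (rule nn_integral_lborel_prod) (auto simp: f_def)
  also have "\<dots> = (\<integral>\<^sup>+x. f b0 x \<partial>lborel) * (\<Prod>b\<in>Basis - {b0}. (\<integral>\<^sup>+x. f b x \<partial>lborel))"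
    using b0 by (simp add: prod.remove)
  also have "\<dots> = ennreal t"
    using assms by (simp add: f_def nd_nn1 nd_nn2)
  finally show ?thesis .
qed


lemma norm_sq_sum: "(norm (z::'a::euclidean_space))^2 = (\<Sum>b\<in>Basis. (z\<bullet>b)^2)"
proof -
  have "(norm z)^2 = z \<bullet> z" by (simp add: power2_norm_eq_inner)
  also have "\<dots> = (\<Sum>b\<in>Basis. (z\<bullet>b) * (z\<bullet>b))" by (rule euclidean_inner)
  finally show ?thesis by (simp add: power2_eq_square)
qed

lemma gam_nn_sq: assumes "0 < t"
  shows "(\<integral>\<^sup>+z. ennreal (gam t (z::'a::euclidean_space) * (norm z)^2) \<partial>lborel) = ennreal (real DIM('a) * t)"
proof -
  have "(\<integral>\<^sup>+z. ennreal (gam t (z::'a) * (norm z)^2) \<partial>lborel) = (\<integral>\<^sup>+(z::'a). (\<Sum>b\<in>Basis. ennreal (gam t z * (z\<bullet>b)^2)) \<partial>lborel)"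
  proof (rule nn_integral_cong)
    fix z :: 'a
    have e: "gam t z * (norm z)^2 = (\<Sum>b\<in>Basis. gam t z * (z\<bullet>b)^2)"
      by (simp only: norm_sq_sum sum_distrib_left)
    show "ennreal (gam t z * (norm z)^2) = (\<Sum>b\<in>Basis. ennreal (gam t z * (z\<bullet>b)^2))"
      unfolding e by (rule sum_ennreal[symmetric]) (simp add: gam_nonneg)
  qed
  also have "\<dots> = (\<Sum>b\<in>(Basis::'a set). (\<integral>\<^sup>+(z::'a). ennreal (gam t z * (z\<bullet>b)^2) \<partial>lborel))"
    by (rule nn_integral_sum) measurable
  also have "\<dots> = (\<Sum>b\<in>(Basis::'a set). ennreal t)"
    by (rule sum.cong[OF refl]) (rule gam_nn2[OF assms])
  also have "\<dots> = ennreal (real DIM('a) * t)"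
    by (metis ennreal_of_nat_eq_real_of_nat ennreal_mult' of_nat_0_le_iff sum_constant)
  finally show ?thesis .
qed

lemma gam_int1: assumes "0 < t"
  shows "integrable lborel (gam t :: 'a::euclidean_space \<Rightarrow> real)" "integral\<^sup>L lborel (gam t :: 'a::euclidean_space \<Rightarrow> real) = 1"
proof -
  have H: "has_bochner_integral lborel (gam t :: 'a \<Rightarrow> real) 1"
    apply (rule has_bochner_integral_nn_integral)
    subgoal by simp
    subgoal by (simp add: gam_nonneg)
    subgoal by simp
    subgoal using gam_nn1[OF assms] by simp
    done
  show "integrable lborel (gam t :: 'a::euclidean_space \<Rightarrow> real)" using H by (rule integrable.intros)
  show "integral\<^sup>L lborel (gam t :: 'a::euclidean_space \<Rightarrow> real) = 1" using H by (rule has_bochner_integral_integral_eq)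
qed

lemma gam_int_sq: assumes "0 < t"
  shows "integrable lborel (\<lambda>z::'a::euclidean_space. gam t z * (norm z)^2)"
    "(\<integral>z. gam t (z::'a::euclidean_space) * (norm z)^2 \<partial>lborel) = real DIM('a) * t"
proof -
  have H: "has_bochner_integral lborel (\<lambda>z::'a. gam t z * (norm z)^2) (real DIM('a) * t)"
    apply (rule has_bochner_integral_nn_integral)
    subgoal by simp
    subgoal by (simp add: gam_nonneg)
    subgoal using assms by simp
    subgoal using gam_nn_sq[OF assms] by simp
    done
  show "integrable lborel (\<lambda>z::'a::euclidean_space. gam t z * (norm z)^2)" using H by (rule integrable.intros)
  show "(\<integral>z. gam t (z::'a::euclidean_space) * (norm z)^2 \<partial>lborel) = real DIM('a) * t" using H by (rule has_bochner_integral_integral_eq)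
qed

lemma gam_closed:
  assumes "0 < t"
  shows "gam t (z::'a::euclidean_space) = exp (- ((norm z)^2) / (2*t)) / sqrt (2*pi*t) ^ DIM('a)"
proof -
  have "gam t z = (\<Prod>b\<in>Basis. exp (- ((z\<bullet>b)^2) / (2*t)) / sqrt (2*pi*t))"
    using assms by (simp add: gam_def normal_density_def)
  also have "\<dots> = (\<Prod>b\<in>Basis. exp (- ((z\<bullet>b)^2) / (2*t))) / sqrt (2*pi*t) ^ DIM('a)"
    by (simp add: prod_dividef)
  also have "(\<Prod>b\<in>Basis. exp (- ((z\<bullet>b)^2) / (2*t))) = exp (\<Sum>b\<in>Basis. - ((z\<bullet>b)^2) / (2*t))"
    by (simp add: exp_sum)
  also have "(\<Sum>b\<in>Basis. - ((z\<bullet>b)^2) / (2*t)) = - ((norm z)^2) / (2*t)"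
    by (simp add: norm_sq_sum sum_divide_distrib sum_negf)
  finally show ?thesis .
qed

lemma gam_le:
  assumes "0 < t"
  shows "gam t (z::'a::euclidean_space) \<le> 1 / sqrt (2*pi*t) ^ DIM('a)"
proof -
  have "exp (- ((norm z)^2) / (2*t)) \<le> 1" using assms by simp
  then show ?thesis using assms by (simp add: gam_closed divide_right_mono)
qed

lemma gam_sym: "gam t (x - y) = gam t (y - x)"
proof -
  have "x - y = - (y - x)" by simp
  then have "\<And>b. ((x - y) \<bullet> b)^2 = ((y - x) \<bullet> b)^2" by (metis inner_minus_left power2_minus)
  then show ?thesis by (simp add: gam_def normal_density_def)
qed

lemma integral_pos_lborel:
  fixes f :: "'a::euclidean_space \<Rightarrow> real"
  assumes "integrable lborel f" "\<And>x. 0 < f x"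
  shows "0 < integral\<^sup>L lborel f"
proof -
  have ge: "0 \<le> integral\<^sup>L lborel f" using assms(2) by (intro integral_nonneg_AE AE_I2) (simp add: less_imp_le)
  have "integral\<^sup>L lborel f \<noteq> 0"
  proof
    assume "integral\<^sup>L lborel f = 0"
    then have "AE x in lborel. f x = 0"
      using integral_nonneg_eq_0_iff_AE[OF assms(1)] assms(2) by (auto intro: less_imp_le)
    moreover have "AE x in lborel. f x \<noteq> 0" using assms(2) by (intro AE_I2) (metis less_irrefl)
    ultimately have "AE (x::'a) in lborel. False" by eventually_elim auto
    then have "ae_filter (lborel::'a measure) = bot" using trivial_limit_def by blast
    then show False by (simp add: ae_filter_eq_bot_iff)
  qed
  with ge show ?thesis by simp
qed

lemma gam_uminus: "gam t (- z) = gam t z"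
  by (simp add: gam_def normal_density_def)

lemma lborel_distr_uminus_eucl: "distr lborel borel uminus = (lborel :: 'a::euclidean_space measure)"
proof -
  have "(lborel :: 'a measure) = density (distr lborel borel (\<lambda>x. 0 + (-1::real) *\<^sub>R x)) (\<lambda>_. \<bar>-1::real\<bar>^DIM('a))"
    by (rule lborel_affine) simp
  also have "(\<lambda>x::'a. 0 + (-1::real) *\<^sub>R x) = uminus" by (rule ext) simp
  finally show ?thesis by (simp add: density_1)
qed

lemma integral_translate:
  fixes f :: "'a::euclidean_space \<Rightarrow> real"
  assumes [measurable]: "f \<in> borel_measurable borel"
  shows "(\<integral>x. f (c + x) \<partial>lborel) = integral\<^sup>L lborel f"
    and "integrable lborel (\<lambda>x. f (c + x)) \<longleftrightarrow> integrable lborel f"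
proof -
  have "integral\<^sup>L lborel f = integral\<^sup>L (distr lborel borel ((+) c)) f" by (simp add: lborel_distr_plus)
  also have "\<dots> = (\<integral>x. f (c + x) \<partial>lborel)" by (rule integral_distr) auto
  finally show "(\<integral>x. f (c + x) \<partial>lborel) = integral\<^sup>L lborel f" by simp
  have "integrable lborel f \<longleftrightarrow> integrable (distr lborel borel ((+) c)) f" by (simp add: lborel_distr_plus)
  also have "\<dots> \<longleftrightarrow> integrable lborel (\<lambda>x. f (c + x))" by (rule integrable_distr_eq) auto
  finally show "integrable lborel (\<lambda>x. f (c + x)) \<longleftrightarrow> integrable lborel f" by simp
qed

lemma integral_uminus_var:
  fixes f :: "'a::euclidean_space \<Rightarrow> real"
  assumes [measurable]: "f \<in> borel_measurable borel"
  shows "(\<integral>x. f (- x) \<partial>lborel) = integral\<^sup>L lborel f"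
    and "integrable lborel (\<lambda>x. f (- x)) \<longleftrightarrow> integrable lborel f"
proof -
  have "integral\<^sup>L lborel f = integral\<^sup>L (distr lborel borel uminus) f" by (simp add: lborel_distr_uminus_eucl)
  also have "\<dots> = (\<integral>x. f (- x) \<partial>lborel)" by (rule integral_distr) auto
  finally show "(\<integral>x. f (- x) \<partial>lborel) = integral\<^sup>L lborel f" by simp
  have "integrable lborel f \<longleftrightarrow> integrable (distr lborel borel uminus) f" by (simp add: lborel_distr_uminus_eucl)
  also have "\<dots> \<longleftrightarrow> integrable lborel (\<lambda>x. f (- x))" by (rule integrable_distr_eq) auto
  finally show "integrable lborel (\<lambda>x. f (- x)) \<longleftrightarrow> integrable lborel f" by simp
qed

lemma le_one_plus_sq: "(x::real) \<le> 1 + x^2"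
proof -
  have "0 \<le> (x - 1)^2" by simp
  then show ?thesis by (simp add: power2_diff) (smt (verit) zero_le_power2)
qed

lemma gam_int_lin: assumes "0 < t"
  shows "integrable lborel (\<lambda>z::'a::euclidean_space. gam t z * (v \<bullet> z))"
    "(\<integral>z. gam t (z::'a::euclidean_space) * (v \<bullet> z) \<partial>lborel) = 0"
proof -
  show int: "integrable lborel (\<lambda>z::'a::euclidean_space. gam t z * (v \<bullet> z))"
  proof (rule Bochner_Integration.integrable_bound)
    show "integrable lborel (\<lambda>z::'a. norm v * (gam t z + gam t z * (norm z)^2))"
      using gam_int1[OF assms] gam_int_sq[OF assms] by auto
    show "AE z in lborel. norm (gam t z * (v \<bullet> z)) \<le> norm (norm v * (gam t z + gam t z * (norm z)^2))"
    proof (intro AE_I2)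
      fix z :: 'a
      have "\<bar>v \<bullet> z\<bar> \<le> norm v * norm z" by (rule Cauchy_Schwarz_ineq2)
      also have "norm z \<le> 1 + (norm z)^2" by (rule le_one_plus_sq)
      finally have "\<bar>v \<bullet> z\<bar> \<le> norm v * (1 + (norm z)^2)" by (simp add: mult_left_mono)
      then have "gam t z * \<bar>v \<bullet> z\<bar> \<le> gam t z * (norm v * (1 + (norm z)^2))"
        by (simp add: mult_left_mono gam_nonneg)
      then show "norm (gam t z * (v \<bullet> z)) \<le> norm (norm v * (gam t z + gam t z * (norm z)^2))"
        by (simp add: abs_mult gam_nonneg algebra_simps)
    qed
  qed auto
  have "(\<integral>z. gam t (z::'a) * (v \<bullet> z) \<partial>lborel) = (\<integral>z. gam t (- z::'a) * (v \<bullet> (- z)) \<partial>lborel)"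
    by (rule integral_uminus_var(1)[symmetric]) measurable
  also have "\<dots> = - (\<integral>z. gam t (z::'a) * (v \<bullet> z) \<partial>lborel)"
    by (simp add: gam_uminus)
  finally show "(\<integral>z. gam t (z::'a::euclidean_space) * (v \<bullet> z) \<partial>lborel) = 0" by simp
qed




lemma amgm: assumes "0 < (a::real)" shows "(u::real) * (w::real) \<le> u^2 / a + a * w^2 / 4"
proof -
  have "0 \<le> (u - a * w / 2)^2" by simp
  also have "(u - a * w / 2)^2 = a * (u^2 / a + a * w^2 / 4 - u * w)"
    using assms by (simp add: power2_eq_square field_simps)
  finally have "0 \<le> u^2 / a + a * w^2 / 4 - u * w"
    using assms by (simp add: zero_le_mult_iff)
  then show ?thesis by simp
qed

lemma inner_le_amgm: assumes "0 < a" shows "\<bar>(v::'a::real_inner) \<bullet> y\<bar> \<le> (norm v)^2 / a + a * (norm y)^2 / 4"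
proof -
  have "\<bar>v \<bullet> y\<bar> \<le> norm v * norm y" by (rule Cauchy_Schwarz_ineq2)
  also have "\<dots> \<le> (norm v)^2 / a + a * (norm y)^2 / 4" by (rule amgm[OF assms])
  finally show ?thesis .
qed

lemma norm_sq_triangle: "(norm (b::'a::real_normed_vector))^2 \<le> 2 * (norm (b - a))^2 + 2 * (norm a)^2"
proof -
  have "norm b \<le> norm (b - a) + norm a" using norm_triangle_ineq[of "b - a" a] by simp
  then have "(norm b)^2 \<le> (norm (b - a) + norm a)^2" by (simp add: power_mono)
  also have "\<dots> \<le> 2 * (norm (b - a))^2 + 2 * (norm a)^2"
    using amgm[of 2 "norm (b - a)" "norm a"] by (simp add: power2_sum)
  finally show ?thesis .
qed

lemma shift_int:
  fixes F :: "'a::euclidean_space \<Rightarrow> real"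
  assumes [measurable]: "F \<in> borel_measurable borel"
  shows "(\<integral>x. F (x - a) \<partial>lborel) = integral\<^sup>L lborel F"
    and "integrable lborel (\<lambda>x. F (x - a)) \<longleftrightarrow> integrable lborel F"
proof -
  have e: "(\<lambda>x. F (x - a)) = (\<lambda>x. F (- a + x))" by (rule ext) (metis diff_conv_add_uminus add.commute)
  show "(\<integral>x. F (x - a) \<partial>lborel) = integral\<^sup>L lborel F"
    unfolding e by (rule integral_translate(1)[OF assms])
  show "integrable lborel (\<lambda>x. F (x - a)) \<longleftrightarrow> integrable lborel F"
    unfolding e by (rule integral_translate(2)[OF assms])
qed

lemma elem_ln: assumes "0 < (u::real)" "0 < (m::real)" shows "u * ln m \<le> u * ln u - u + m"
proof -
  have "ln (m / u) \<le> m / u - 1" using assms by (intro ln_le_minus_one) simp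
  then have "u * ln (m / u) \<le> u * (m / u - 1)" using assms by (intro mult_left_mono) auto
  moreover have "ln (m / u) = ln m - ln u" using assms by (simp add: ln_div)
  ultimately show ?thesis using assms by (simp add: algebra_simps)
qed

lemma elem_ln_lower: assumes "0 < p" "0 < q" shows "p - q \<le> p * ln (p / (q::real))"
proof -
  have "ln (q / p) \<le> q / p - 1" using assms by (intro ln_le_minus_one) simp
  moreover have "ln (q / p) = - ln (p / q)" using assms by (simp add: ln_div)
  ultimately have "1 - q / p \<le> ln (p / q)" by simp
  then have "p * (1 - q / p) \<le> p * ln (p / q)" using assms by (intro mult_left_mono) auto
  then show ?thesis using assms by (simp add: algebra_simps)
qed

lemma elem_tv:
  assumes p: "0 < p" and q: "0 < q" and s: "0 < s"
  shows "\<bar>p - q\<bar> \<le> (p * ln (p / q) - p + q) / (2 * s) + s * (p + (q::real))"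
proof -
  define sp where "sp = sqrt p"
  define sq where "sq = sqrt q"
  have sp0: "0 < sp" and sq0: "0 < sq" using p q by (simp_all add: sp_def sq_def)
  have psp: "p = sp^2" and qsq: "q = sq^2" using p q by (simp_all add: sp_def sq_def)
  define r where "r = sq / sp"
  have r0: "0 < r" using sp0 sq0 by (simp add: r_def)
  have "ln r \<le> r - 1" using r0 by (rule ln_le_minus_one)
  moreover have "ln (p / q) = - 2 * ln r"
  proof -
    have "p / q = inverse (r^2)" using sp0 sq0 by (simp add: psp qsq r_def power_divide field_simps)
    then show ?thesis using r0 by (simp add: ln_inverse ln_realpow)
  qed
  ultimately have "2 - 2 * r \<le> ln (p / q)" by simp
  then have "p * (2 - 2 * r) \<le> p * ln (p / q)" using p by (intro mult_left_mono) auto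
  moreover have "p * r = sp * sq" using sp0 by (simp add: psp r_def power2_eq_square)
  ultimately have h: "(sp - sq)^2 \<le> p * ln (p / q) - p + q"
    by (simp add: power2_diff psp qsq algebra_simps)
  have "p - q = (sp - sq) * (sp + sq)" by (simp add: psp qsq power2_eq_square algebra_simps)
  then have "\<bar>p - q\<bar> = \<bar>sp - sq\<bar> * (sp + sq)"
    using sp0 sq0 by (simp add: abs_mult)
  also have "\<dots> \<le> \<bar>sp - sq\<bar>^2 / (2 * s) + (2 * s) * (sp + sq)^2 / 4"
    using s by (intro amgm) simp
  also have "\<bar>sp - sq\<bar>^2 = (sp - sq)^2" by simp
  also have "(sp + sq)^2 \<le> 2 * (p + q)"
    using amgm[of 2 sp sq] by (simp add: psp qsq power2_sum)
  then have "s * (sp + sq)^2 \<le> s * (2 * (p + q))" using s by (intro mult_left_mono) auto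
  then have "(2 * s) * (sp + sq)^2 / 4 \<le> s * (p + q)" by (simp add: algebra_simps)
  then have "(sp - sq)^2 / (2 * s) + (2 * s) * (sp + sq)^2 / 4 \<le> (p * ln (p / q) - p + q) / (2 * s) + s * (p + q)"
    using h s by (intro add_mono divide_right_mono) auto
  finally show ?thesis .
qed

context
  fixes g :: "'a::euclidean_space \<Rightarrow> real" and grad :: "'a \<Rightarrow> 'a" and \<alpha> \<beta> \<eta> :: real
  assumes grad: "\<And>x. GDERIV g x :> grad x"
    and alpha_pos: "0 < \<alpha>"
    and sc: "strongly_convex g grad \<alpha>"
    and sm: "beta_smooth g grad \<beta>"
    and eta_pos: "0 < \<eta>"
begin

lemma g_cont: "continuous_on UNIV g"
proof -
  have "\<And>x. isCont g x" using grad unfolding gderiv_def by (metis has_derivative_continuous)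
  then show ?thesis by (simp add: continuous_at_imp_continuous_on)
qed

lemma g_meas[measurable]: "g \<in> borel_measurable borel"
  by (rule borel_measurable_continuous_onI[OF g_cont])

lemma sc': "g x - g y \<ge> grad y \<bullet> (x - y) + \<alpha> / 2 * (norm (x - y))\<^sup>2"
  using sc unfolding strongly_convex_def by blast

lemma sm': "g x - g y \<le> grad y \<bullet> (x - y) + \<beta> / 2 * (norm (x - y))\<^sup>2"
  using sm unfolding beta_smooth_def by blast

definition "c0 = \<bar>g 0\<bar> + (norm (grad 0))^2 / (2*\<alpha>) + (norm (grad 0))^2"
definition "c1 = \<bar>\<beta>\<bar> + 1"

lemma g_lower: "g 0 - (norm (grad 0))^2 / (2*\<alpha>) \<le> g y"
proof -
  have "\<bar>grad 0 \<bullet> y\<bar> \<le> (norm (grad 0))^2 / (2*\<alpha>) + (2*\<alpha>) * (norm y)^2 / 4"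
    using alpha_pos by (intro inner_le_amgm) simp
  moreover have "g y - g 0 \<ge> grad 0 \<bullet> y + \<alpha> / 2 * (norm y)\<^sup>2" using sc'[where x=y and y=0] by simp
  ultimately show ?thesis by linarith
qed

lemma g_upper: "g y \<le> g 0 + (norm (grad 0))^2 + c1 * (norm y)^2"
proof -
  have "\<bar>grad 0 \<bullet> y\<bar> \<le> (norm (grad 0))^2 / 1 + 1 * (norm y)^2 / 4"
    by (intro inner_le_amgm) simp
  moreover have "g y - g 0 \<le> grad 0 \<bullet> y + \<beta> / 2 * (norm y)\<^sup>2" using sm'[where x=y and y=0] by simp
  moreover have "\<beta> / 2 * (norm y)\<^sup>2 \<le> \<bar>\<beta>\<bar> * (norm y)^2" by (intro mult_right_mono) auto
  moreover have "0 \<le> (norm y)^2" by simp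
  ultimately show ?thesis unfolding c1_def distrib_right by linarith
qed

lemma g_abs: "\<bar>g y\<bar> \<le> c0 + c1 * (norm y)^2"
  using g_lower[of y] g_upper[of y] alpha_pos unfolding c0_def c1_def
  by (smt (verit) divide_nonneg_nonneg zero_le_power2 mult_nonneg_nonneg abs_ge_zero)

lemma c1_pos: "0 < c1" unfolding c1_def by simp
lemma c0_nonneg: "0 \<le> c0" unfolding c0_def using alpha_pos by simp

definition "kap = 2 / \<alpha>"
definition "Cg = exp (- g 0 + (norm (grad 0))^2 / \<alpha>) * sqrt (2*pi*kap) ^ DIM('a)"

lemma kap_pos: "0 < kap" unfolding kap_def using alpha_pos by simp
lemma Cg_pos: "0 < Cg" unfolding Cg_def using kap_pos by simp

lemma exp_g_le: "exp (- g y) \<le> Cg * gam kap y"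
proof -
  have "\<bar>grad 0 \<bullet> y\<bar> \<le> (norm (grad 0))^2 / \<alpha> + \<alpha> * (norm y)^2 / 4"
    using alpha_pos by (intro inner_le_amgm) simp
  moreover have "g y - g 0 \<ge> grad 0 \<bullet> y + \<alpha> / 2 * (norm y)\<^sup>2" using sc'[where x=y and y=0] by simp
  moreover have "- ((norm y)^2) / (2*kap) = - (\<alpha> * (norm y)^2 / 4)"
    unfolding kap_def using alpha_pos by (simp add: field_simps)
  ultimately have "- g y \<le> - g 0 + (norm (grad 0))^2 / \<alpha> + (- ((norm y)^2) / (2*kap))"
    by linarith
  then have "exp (- g y) \<le> exp (- g 0 + (norm (grad 0))^2 / \<alpha>) * exp (- ((norm y)^2) / (2*kap))"
    by (simp add: exp_add[symmetric])
  also have "\<dots> = Cg * gam kap y"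
    using kap_pos unfolding Cg_def by (simp add: gam_closed)
  finally show ?thesis .
qed

lemma int_expg_poly: "integrable lborel (\<lambda>y. exp (- g y) * (A + B * (norm y)^2))"
proof (rule Bochner_Integration.integrable_bound)
  show "integrable lborel (\<lambda>y. Cg * (\<bar>A\<bar> * gam kap y + \<bar>B\<bar> * (gam kap y * (norm y)^2)))"
    using gam_int1(1)[OF kap_pos] gam_int_sq(1)[OF kap_pos]
    by (intro integrable_mult_right integrable_add) auto
  show "(\<lambda>y. exp (- g y) * (A + B * (norm y)^2)) \<in> borel_measurable lborel" by measurable
  show "AE y in lborel. norm (exp (- g y) * (A + B * (norm y)^2)) \<le> norm (Cg * (\<bar>A\<bar> * gam kap y + \<bar>B\<bar> * (gam kap y * (norm y)^2)))"
  proof (intro AE_I2)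
    fix y :: 'a
    have "\<bar>A + B * (norm y)^2\<bar> \<le> \<bar>A\<bar> + \<bar>B\<bar> * (norm y)^2"
      by (metis abs_mult abs_triangle_ineq abs_of_nonneg zero_le_power2)
    then have "exp (- g y) * \<bar>A + B * (norm y)^2\<bar> \<le> (Cg * gam kap y) * (\<bar>A\<bar> + \<bar>B\<bar> * (norm y)^2)"
      using exp_g_le[of y] Cg_pos gam_nonneg[of kap y] by (intro mult_mono) auto
    moreover have "0 \<le> Cg * (\<bar>A\<bar> * gam kap y + \<bar>B\<bar> * (gam kap y * (norm y)^2))"
      using Cg_pos gam_nonneg by (intro mult_nonneg_nonneg add_nonneg_nonneg) auto
    moreover have "norm (exp (- g y) * (A + B * (norm y)^2)) = exp (- g y) * \<bar>A + B * (norm y)^2\<bar>"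
      by (simp add: abs_mult)
    moreover have "(Cg * gam kap y) * (\<bar>A\<bar> + \<bar>B\<bar> * (norm y)^2) = Cg * (\<bar>A\<bar> * gam kap y + \<bar>B\<bar> * (gam kap y * (norm y)^2))"
      by (simp add: algebra_simps)
    ultimately show "norm (exp (- g y) * (A + B * (norm y)^2)) \<le> norm (Cg * (\<bar>A\<bar> * gam kap y + \<bar>B\<bar> * (gam kap y * (norm y)^2)))"
      by (metis real_norm_def abs_of_nonneg)
  qed
qed

definition "Zg = (LINT z|lborel. exp (- g z))"

lemma Zg_pos: "0 < Zg"
  unfolding Zg_def using int_expg_poly[of 1 0] by (intro integral_pos_lborel) auto

lemma q_eq: "gibbs_density g y = exp (- g y) / Zg"
  unfolding gibbs_density_def Zg_def ..

lemma q_fun: "gibbs_density g = (\<lambda>y. exp (- g y) / Zg)"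
  by (rule ext) (rule q_eq)

lemma q_pos: "0 < gibbs_density g y"
  using Zg_pos by (simp add: q_eq)

lemma q_meas[measurable]: "gibbs_density g \<in> borel_measurable borel"
  unfolding q_fun by measurable

lemma q_poly: "integrable lborel (\<lambda>y. gibbs_density g y * (A + B * (norm y)^2))"
proof -
  have "(\<lambda>y. gibbs_density g y * (A + B * (norm y)^2)) = (\<lambda>y. exp (- g y) * (A + B * (norm y)^2) / Zg)"
    by (simp add: q_eq)
  then show ?thesis using int_expg_poly[of A B] by simp
qed

lemma q_int: "integrable lborel (gibbs_density g)"
  using q_poly[of 1 0] by simp

lemma q_integral: "integral\<^sup>L lborel (gibbs_density g) = 1"
  using Zg_pos unfolding q_fun by (simp add: Zg_def[symmetric])

definition "Gm = 1 / sqrt (2*pi*\<eta>) ^ DIM('a)"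

lemma gam_eta_le: "gam \<eta> (z::'a) \<le> Gm"
  unfolding Gm_def by (rule gam_le[OF eta_pos])

lemma Gm_pos: "0 < Gm" unfolding Gm_def using eta_pos by simp

definition "pd x = (LINT y|lborel. gibbs_density g y * gam \<eta> (x - y))"

lemma pd_int_y: "integrable lborel (\<lambda>y. gibbs_density g y * gam \<eta> (x - y))"
proof (rule Bochner_Integration.integrable_bound)
  show "integrable lborel (\<lambda>y. gibbs_density g y * Gm)" using q_int by simp
  show "(\<lambda>y. gibbs_density g y * gam \<eta> (x - y)) \<in> borel_measurable lborel" by measurable
  show "AE y in lborel. norm (gibbs_density g y * gam \<eta> (x - y)) \<le> norm (gibbs_density g y * Gm)"
  proof (intro AE_I2)
    fix y :: 'a
    have "gibbs_density g y * gam \<eta> (x - y) \<le> gibbs_density g y * Gm"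
      using q_pos[of y] gam_eta_le[of "x - y"] by (intro mult_left_mono) auto
    then show "norm (gibbs_density g y * gam \<eta> (x - y)) \<le> norm (gibbs_density g y * Gm)"
      using q_pos[of y] gam_nonneg[of \<eta> "x - y"] Gm_pos by (simp add: abs_mult)
  qed
qed

lemma pd_pos: "0 < pd x"
  unfolding pd_def using pd_int_y q_pos gam_pos[OF eta_pos] by (intro integral_pos_lborel mult_pos_pos) auto

lemma gam_shift_int: "integrable lborel (\<lambda>x. gam \<eta> (x - a))" "(\<integral>x. gam \<eta> (x - a) \<partial>lborel) = 1"
  using shift_int[of "gam \<eta>" a] gam_int1[OF eta_pos] by auto

lemma prod1_int: "integrable (lborel \<Otimes>\<^sub>M lborel) (\<lambda>(y, x). gibbs_density g y * gam \<eta> (x - y))"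
proof (rule lborel_pair.Fubini_integrable)
  show "(\<lambda>(y, x). gibbs_density g y * gam \<eta> (x - y)) \<in> borel_measurable (lborel \<Otimes>\<^sub>M lborel)"
    by measurable
  have "(\<lambda>y. \<integral>x. norm ((\<lambda>(y, x). gibbs_density g y * gam \<eta> (x - y)) (y, x)) \<partial>lborel) = gibbs_density g"
  proof (rule ext)
    fix y :: 'a
    have "(\<integral>x. norm ((\<lambda>(y, x). gibbs_density g y * gam \<eta> (x - y)) (y, x)) \<partial>lborel)
        = (\<integral>x. gibbs_density g y * gam \<eta> (x - y) \<partial>lborel)"
      using q_pos[of y] gam_nonneg by (intro Bochner_Integration.integral_cong) (simp_all add: abs_mult abs_of_nonneg[OF gam_nonneg])
    also have "\<dots> = gibbs_density g y" using gam_shift_int(2)[of y] by simp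
    finally show "(\<integral>x. norm ((\<lambda>(y, x). gibbs_density g y * gam \<eta> (x - y)) (y, x)) \<partial>lborel) = gibbs_density g y" .
  qed
  then show "integrable lborel (\<lambda>y. \<integral>x. norm ((\<lambda>(y, x). gibbs_density g y * gam \<eta> (x - y)) (y, x)) \<partial>lborel)"
    using q_int by simp
  show "AE y in lborel. integrable lborel (\<lambda>x. (\<lambda>(y, x). gibbs_density g y * gam \<eta> (x - y)) (y, x))"
    by (intro AE_I2) (simp add: gam_shift_int(1))
qed

lemma pd_integrable: "integrable lborel pd"
proof -
  have "integrable lborel (\<lambda>x. \<integral>y. gibbs_density g y * gam \<eta> (x - y) \<partial>lborel)"
    by (rule lborel_pair.integrable_snd[where f="\<lambda>y x. gibbs_density g y * gam \<eta> (x - y)"]) (use prod1_int in simp)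
  then show ?thesis unfolding pd_def[abs_def] .
qed

lemma pd_integral: "integral\<^sup>L lborel pd = 1"
proof -
  have "integral\<^sup>L lborel pd = (\<integral>x. \<integral>y. gibbs_density g y * gam \<eta> (x - y) \<partial>lborel \<partial>lborel)"
    unfolding pd_def[abs_def] ..
  also have "\<dots> = integral\<^sup>L (lborel \<Otimes>\<^sub>M lborel) (\<lambda>(y, x). gibbs_density g y * gam \<eta> (x - y))"
    by (rule lborel_pair.integral_snd[where f="\<lambda>y x. gibbs_density g y * gam \<eta> (x - y)"]) (use prod1_int in simp)
  also have "\<dots> = (\<integral>y. \<integral>x. gibbs_density g y * gam \<eta> (x - y) \<partial>lborel \<partial>lborel)"
    by (rule lborel_pair.integral_fst[where f="\<lambda>y x. gibbs_density g y * gam \<eta> (x - y)", symmetric]) (use prod1_int in simp)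
  also have "\<dots> = (\<integral>y. gibbs_density g y \<partial>lborel)"
    by (simp add: gam_shift_int(2))
  also have "\<dots> = 1" by (rule q_integral)
  finally show ?thesis .
qed

lemma pd_meas[measurable]: "pd \<in> borel_measurable borel"
  using borel_measurable_integrable[OF pd_integrable] by simp

definition "f2 a b = gibbs_density g a * gam \<eta> (b - a) * (g b - g a)"

lemma f2_meas[measurable]: "(\<lambda>(a, b). f2 a b) \<in> borel_measurable (lborel \<Otimes>\<^sub>M lborel)"
  unfolding f2_def[abs_def] by measurable

lemma H1: "integrable lborel (\<lambda>a. f2 a b)"
proof (rule Bochner_Integration.integrable_bound)
  show "integrable lborel (\<lambda>a. gibbs_density g a * (Gm * (\<bar>g b\<bar> + c0) + Gm * c1 * (norm a)^2))"
    by (rule q_poly)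
  show "(\<lambda>a. f2 a b) \<in> borel_measurable lborel" unfolding f2_def by measurable
  show "AE a in lborel. norm (f2 a b) \<le> norm (gibbs_density g a * (Gm * (\<bar>g b\<bar> + c0) + Gm * c1 * (norm a)^2))"
  proof (intro AE_I2)
    fix a :: 'a
    have q0: "0 < gibbs_density g a" by (rule q_pos)
    have "\<bar>g b - g a\<bar> \<le> \<bar>g b\<bar> + c0 + c1 * (norm a)^2" using g_abs[of a] by linarith
    moreover have "0 \<le> \<bar>g b - g a\<bar>" by simp
    ultimately have "gam \<eta> (b - a) * \<bar>g b - g a\<bar> \<le> Gm * (\<bar>g b\<bar> + c0 + c1 * (norm a)^2)"
      using gam_eta_le[of "b - a"] gam_nonneg[of \<eta> "b - a"] by (intro mult_mono) auto
    then have "gibbs_density g a * (gam \<eta> (b - a) * \<bar>g b - g a\<bar>) \<le> gibbs_density g a * (Gm * (\<bar>g b\<bar> + c0) + Gm * c1 * (norm a)^2)"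
      using q0 by (intro mult_left_mono) (auto simp: algebra_simps)
    moreover have "0 \<le> Gm * (\<bar>g b\<bar> + c0) + Gm * c1 * (norm a)^2"
      using Gm_pos c0_nonneg c1_pos by (intro add_nonneg_nonneg mult_nonneg_nonneg) auto
    ultimately show "norm (f2 a b) \<le> norm (gibbs_density g a * (Gm * (\<bar>g b\<bar> + c0) + Gm * c1 * (norm a)^2))"
      using q0 gam_nonneg[of \<eta> "b - a"] unfolding f2_def by (simp add: abs_mult mult.assoc)
  qed
qed

lemma gam_sq_shift_int: "integrable lborel (\<lambda>b. gam \<eta> (b - (a::'a)) * (norm (b - a))^2)"
  "(\<integral>b. gam \<eta> (b - a) * (norm (b - a))^2 \<partial>lborel) = real DIM('a) * \<eta>"
proof -
  have i: "integrable lborel (\<lambda>z::'a. gam \<eta> z * (norm z)^2)" by (rule gam_int_sq(1)[OF eta_pos])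
  have v: "(\<integral>z. gam \<eta> (z::'a) * (norm z)^2 \<partial>lborel) = real DIM('a) * \<eta>" by (rule gam_int_sq(2)[OF eta_pos])
  show "integrable lborel (\<lambda>b. gam \<eta> (b - a) * (norm (b - a))^2)"
    using shift_int(2)[of "\<lambda>z. gam \<eta> z * (norm z)^2" a] i by simp
  show "(\<integral>b. gam \<eta> (b - a) * (norm (b - a))^2 \<partial>lborel) = real DIM('a) * \<eta>"
    using shift_int(1)[of "\<lambda>z. gam \<eta> z * (norm z)^2" a] v by simp
qed

lemma gam_lin_shift_int: "integrable lborel (\<lambda>b. gam \<eta> (b - (a::'a)) * (v \<bullet> (b - a)))"
  "(\<integral>b. gam \<eta> (b - (a::'a)) * (v \<bullet> (b - a)) \<partial>lborel) = 0"
proof -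
  have i: "integrable lborel (\<lambda>z::'a. gam \<eta> z * (v \<bullet> z))" by (rule gam_int_lin(1)[OF eta_pos])
  have w: "(\<integral>z. gam \<eta> (z::'a) * (v \<bullet> z) \<partial>lborel) = 0" by (rule gam_int_lin(2)[OF eta_pos])
  show "integrable lborel (\<lambda>b. gam \<eta> (b - a) * (v \<bullet> (b - a)))"
    using shift_int(2)[of "\<lambda>z. gam \<eta> z * (v \<bullet> z)" a] i by simp
  show "(\<integral>b. gam \<eta> (b - a) * (v \<bullet> (b - a)) \<partial>lborel) = 0"
    using shift_int(1)[of "\<lambda>z. gam \<eta> z * (v \<bullet> z)" a] w by simp
qed

definition "Bd a b = gibbs_density g a * (2*c0 + 3*c1*(norm a)^2) * gam \<eta> (b - a) + 2*c1*gibbs_density g a * (gam \<eta> (b - a) * (norm (b - a))^2)"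

lemma Bd_int: "integrable lborel (\<lambda>b. Bd a b)"
  unfolding Bd_def using gam_shift_int(1)[of a] gam_sq_shift_int(1)[of a]
  by (intro Bochner_Integration.integrable_add Bochner_Integration.integrable_mult_right)

lemma Bd_integral: "(\<integral>b. Bd a b \<partial>lborel) = gibbs_density g a * (2*c0 + 2*c1*real DIM('a)*\<eta> + 3*c1*(norm a)^2)"
proof -
  have "(\<integral>b. Bd a b \<partial>lborel) = gibbs_density g a * (2*c0 + 3*c1*(norm a)^2) * (\<integral>b. gam \<eta> (b - a) \<partial>lborel)
      + 2*c1*gibbs_density g a * (\<integral>b. gam \<eta> (b - a) * (norm (b - a))^2 \<partial>lborel)"
    unfolding Bd_def using gam_shift_int(1)[of a] gam_sq_shift_int(1)[of a]
    by (subst Bochner_Integration.integral_add) (auto intro!: Bochner_Integration.integrable_mult_right)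
  also have "\<dots> = gibbs_density g a * (2*c0 + 2*c1*real DIM('a)*\<eta> + 3*c1*(norm a)^2)"
    by (simp add: gam_shift_int(2) gam_sq_shift_int(2) algebra_simps)
  finally show ?thesis .
qed

lemma f2_le_Bd: "\<bar>f2 a b\<bar> \<le> Bd a b"
proof -
  have q0: "0 < gibbs_density g a" by (rule q_pos)
  have "\<bar>g b - g a\<bar> \<le> 2*c0 + c1 * (norm b)^2 + c1 * (norm a)^2" using g_abs[of a] g_abs[of b] by linarith
  also have "\<dots> \<le> 2*c0 + c1 * (2 * (norm (b - a))^2 + 2 * (norm a)^2) + c1 * (norm a)^2"
    using norm_sq_triangle[of b a] c1_pos by (simp add: mult_left_mono)
  finally have "\<bar>g b - g a\<bar> \<le> (2*c0 + 3*c1*(norm a)^2) + 2*c1*(norm (b - a))^2" by (simp add: algebra_simps)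
  then have "gibbs_density g a * gam \<eta> (b - a) * \<bar>g b - g a\<bar> \<le> gibbs_density g a * gam \<eta> (b - a) * ((2*c0 + 3*c1*(norm a)^2) + 2*c1*(norm (b - a))^2)"
    using q0 gam_nonneg[of \<eta> "b - a"] by (intro mult_left_mono) auto
  moreover have "\<bar>f2 a b\<bar> = gibbs_density g a * gam \<eta> (b - a) * \<bar>g b - g a\<bar>"
    unfolding f2_def using q0 gam_nonneg[of \<eta> "b - a"] by (simp add: abs_mult)
  moreover have "Bd a b = gibbs_density g a * gam \<eta> (b - a) * ((2*c0 + 3*c1*(norm a)^2) + 2*c1*(norm (b - a))^2)"
    unfolding Bd_def by (simp add: algebra_simps)
  ultimately show ?thesis by simp
qed

lemma H2: "integrable lborel (\<lambda>b. f2 a b)"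
proof (rule Bochner_Integration.integrable_bound)
  show "integrable lborel (\<lambda>b. Bd a b)" by (rule Bd_int)
  show "(\<lambda>b. f2 a b) \<in> borel_measurable lborel" unfolding f2_def by measurable
  show "AE b in lborel. norm (f2 a b) \<le> norm (Bd a b)"
    using f2_le_Bd[of a] by (intro AE_I2) (metis abs_ge_zero order_trans real_norm_def abs_of_nonneg)
qed

lemma prod2_int: "integrable (lborel \<Otimes>\<^sub>M lborel) (\<lambda>(a, b). f2 a b)"
proof (rule lborel_pair.Fubini_integrable)
  show "(\<lambda>(a, b). f2 a b) \<in> borel_measurable (lborel \<Otimes>\<^sub>M lborel)" by (rule f2_meas)
  show "AE a in lborel. integrable lborel (\<lambda>b. (\<lambda>(a, b). f2 a b) (a, b))"
    using H2 by (intro AE_I2) simp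
  show "integrable lborel (\<lambda>a. \<integral>b. norm ((\<lambda>(a, b). f2 a b) (a, b)) \<partial>lborel)"
  proof (rule Bochner_Integration.integrable_bound)
    show "integrable lborel (\<lambda>a. gibbs_density g a * ((2*c0 + 2*c1*real DIM('a)*\<eta>) + 3*c1*(norm a)^2))"
      by (rule q_poly)
    show "(\<lambda>a. \<integral>b. norm ((\<lambda>(a, b). f2 a b) (a, b)) \<partial>lborel) \<in> borel_measurable lborel"
      by measurable
    show "AE a in lborel. norm (\<integral>b. norm ((\<lambda>(a, b). f2 a b) (a, b)) \<partial>lborel) \<le> norm (gibbs_density g a * ((2*c0 + 2*c1*real DIM('a)*\<eta>) + 3*c1*(norm a)^2))"
    proof (intro AE_I2)
      fix a :: 'a
      have "(\<integral>b. norm (f2 a b) \<partial>lborel) \<le> (\<integral>b. Bd a b \<partial>lborel)"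
        using H2[of a] Bd_int[of a] f2_le_Bd[of a] by (intro integral_mono) auto
      also have "\<dots> = gibbs_density g a * ((2*c0 + 2*c1*real DIM('a)*\<eta>) + 3*c1*(norm a)^2)"
        by (simp add: Bd_integral add.assoc)
      finally have "(\<integral>b. norm (f2 a b) \<partial>lborel) \<le> gibbs_density g a * ((2*c0 + 2*c1*real DIM('a)*\<eta>) + 3*c1*(norm a)^2)" .
      moreover have "0 \<le> (\<integral>b. norm (f2 a b) \<partial>lborel)" by (rule Bochner_Integration.integral_nonneg) simp
      ultimately show "norm (\<integral>b. norm ((\<lambda>(a, b). f2 a b) (a, b)) \<partial>lborel) \<le> norm (gibbs_density g a * ((2*c0 + 2*c1*real DIM('a)*\<eta>) + 3*c1*(norm a)^2))"
        by simp
    qed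
  qed
qed

lemma hh_int: "integrable lborel (\<lambda>b. \<integral>a. f2 a b \<partial>lborel)"
  by (rule lborel_pair.integrable_snd[where f=f2]) (use prod2_int in simp)

lemma hh_integral: "(\<integral>b. (\<integral>a. f2 a b \<partial>lborel) \<partial>lborel) = (\<integral>a. (\<integral>b. f2 a b \<partial>lborel) \<partial>lborel)"
proof -
  have "(\<integral>b. (\<integral>a. f2 a b \<partial>lborel) \<partial>lborel) = integral\<^sup>L (lborel \<Otimes>\<^sub>M lborel) (\<lambda>(a, b). f2 a b)"
    by (rule lborel_pair.integral_snd[where f=f2]) (use prod2_int in simp)
  also have "\<dots> = (\<integral>a. (\<integral>b. f2 a b \<partial>lborel) \<partial>lborel)"
    by (rule lborel_pair.integral_fst[where f=f2, symmetric]) (use prod2_int in simp)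
  finally show ?thesis .
qed

lemma inner_bound: "(\<integral>b. f2 a b \<partial>lborel) \<le> gibbs_density g a * (\<beta> / 2 * (real DIM('a) * \<eta>))"
proof -
  have q0: "0 < gibbs_density g a" by (rule q_pos)
  have "(\<integral>b. f2 a b \<partial>lborel) \<le> (\<integral>b. gibbs_density g a * (gam \<eta> (b - a) * (grad a \<bullet> (b - a))) + gibbs_density g a * \<beta> / 2 * (gam \<eta> (b - a) * (norm (b - a))^2) \<partial>lborel)"
  proof (rule integral_mono)
    show "integrable lborel (\<lambda>b. f2 a b)" by (rule H2)
    show "integrable lborel (\<lambda>b. gibbs_density g a * (gam \<eta> (b - a) * (grad a \<bullet> (b - a))) + gibbs_density g a * \<beta> / 2 * (gam \<eta> (b - a) * (norm (b - a))^2))"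
      using gam_lin_shift_int(1)[of a "grad a"] gam_sq_shift_int(1)[of a]
      by (intro Bochner_Integration.integrable_add Bochner_Integration.integrable_mult_right)
    fix b :: 'a
    have "g b - g a \<le> grad a \<bullet> (b - a) + \<beta> / 2 * (norm (b - a))\<^sup>2" by (rule sm')
    then have "gibbs_density g a * gam \<eta> (b - a) * (g b - g a) \<le> gibbs_density g a * gam \<eta> (b - a) * (grad a \<bullet> (b - a) + \<beta> / 2 * (norm (b - a))\<^sup>2)"
      using q0 gam_nonneg[of \<eta> "b - a"] by (intro mult_left_mono) auto
    then show "f2 a b \<le> gibbs_density g a * (gam \<eta> (b - a) * (grad a \<bullet> (b - a))) + gibbs_density g a * \<beta> / 2 * (gam \<eta> (b - a) * (norm (b - a))^2)"
      unfolding f2_def by (simp add: algebra_simps)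
  qed
  also have "\<dots> = gibbs_density g a * (\<integral>b. gam \<eta> (b - a) * (grad a \<bullet> (b - a)) \<partial>lborel) + gibbs_density g a * \<beta> / 2 * (\<integral>b. gam \<eta> (b - a) * (norm (b - a))^2 \<partial>lborel)"
    using gam_lin_shift_int(1)[of a "grad a"] gam_sq_shift_int(1)[of a]
    by (subst Bochner_Integration.integral_add) (auto intro!: Bochner_Integration.integrable_mult_right)
  also have "\<dots> = gibbs_density g a * (\<beta> / 2 * (real DIM('a) * \<eta>))"
    by (simp add: gam_lin_shift_int(2) gam_sq_shift_int(2))
  finally show ?thesis .
qed

lemma hh_bound: "(\<integral>b. (\<integral>a. f2 a b \<partial>lborel) \<partial>lborel) \<le> \<beta> / 2 * (real DIM('a) * \<eta>)"
proof -
  have "(\<integral>a. (\<integral>b. f2 a b \<partial>lborel) \<partial>lborel) \<le> (\<integral>a. gibbs_density g a * (\<beta> / 2 * (real DIM('a) * \<eta>)) \<partial>lborel)"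
  proof (rule integral_mono)
    show "integrable lborel (\<lambda>a. \<integral>b. f2 a b \<partial>lborel)"
      by (rule lborel_pair.integrable_fst[where f=f2]) (use prod2_int in simp)
    show "integrable lborel (\<lambda>a. gibbs_density g a * (\<beta> / 2 * (real DIM('a) * \<eta>)))"
      using q_int by simp
    show "\<And>a. a \<in> space lborel \<Longrightarrow> (\<integral>b. f2 a b \<partial>lborel) \<le> gibbs_density g a * (\<beta> / 2 * (real DIM('a) * \<eta>))"
      by (rule inner_bound)
  qed
  also have "\<dots> = \<beta> / 2 * (real DIM('a) * \<eta>)" using q_integral by simp
  finally show ?thesis unfolding hh_integral .
qed

lemma gam_flip_int: "integrable lborel (\<lambda>a. gam \<eta> ((x::'a) - a))" "(\<integral>a. gam \<eta> ((x::'a) - a) \<partial>lborel) = 1"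
  using gam_shift_int[of x] by (simp_all add: gam_sym[of _ x])

lemma kl_pt: "pd x * ln (pd x / gibbs_density g x) \<le> (\<integral>a. f2 a x \<partial>lborel)"
proof -
  define m where "m = pd x / gibbs_density g x"
  have qx: "0 < gibbs_density g x" by (rule q_pos)
  have m0: "0 < m" unfolding m_def using pd_pos qx by simp
  have pt: "gibbs_density g a * gam \<eta> (x - a) * ln m \<le> f2 a x - gibbs_density g a * gam \<eta> (x - a) + pd x * gam \<eta> (x - a)" for a
  proof -
    define u where "u = gibbs_density g a / gibbs_density g x"
    have qa: "0 < gibbs_density g a" by (rule q_pos)
    have u0: "0 < u" unfolding u_def using qa qx by simp
    have lnu: "ln u = g x - g a"
      unfolding u_def q_eq using Zg_pos by (simp add: exp_diff[symmetric] ln_div)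
    have K0: "0 \<le> gibbs_density g x * gam \<eta> (x - a)" using qx gam_nonneg[of \<eta> "x - a"] by simp
    have "(gibbs_density g x * gam \<eta> (x - a)) * (u * ln m) \<le> (gibbs_density g x * gam \<eta> (x - a)) * (u * ln u - u + m)"
      using elem_ln[OF u0 m0] K0 by (rule mult_left_mono)
    moreover have e1: "(Q*G)*(w*L) = (Q*w)*G*L" for Q G w L :: real by (simp add: mult_ac)
    moreover have e2: "(Q*G)*(w*lu - w + M) = (Q*w)*G*lu - (Q*w)*G + (Q*M)*G" for Q G w lu M :: real
      by (simp add: algebra_simps)
    ultimately have "(gibbs_density g x * u) * gam \<eta> (x - a) * ln m \<le> (gibbs_density g x * u) * gam \<eta> (x - a) * ln u - (gibbs_density g x * u) * gam \<eta> (x - a) + (gibbs_density g x * m) * gam \<eta> (x - a)"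
      by metis
    moreover have "gibbs_density g x * u = gibbs_density g a" unfolding u_def using qx by simp
    moreover have "gibbs_density g x * m = pd x" unfolding m_def using qx by simp
    ultimately show ?thesis unfolding f2_def lnu by (simp add: mult.commute)
  qed
  have "pd x * ln m = (\<integral>a. gibbs_density g a * gam \<eta> (x - a) * ln m \<partial>lborel)"
    unfolding pd_def by simp
  also have "\<dots> \<le> (\<integral>a. f2 a x - gibbs_density g a * gam \<eta> (x - a) + pd x * gam \<eta> (x - a) \<partial>lborel)"
  proof (rule integral_mono)
    show "integrable lborel (\<lambda>a. gibbs_density g a * gam \<eta> (x - a) * ln m)"
      using pd_int_y[of x] by simp
    show "integrable lborel (\<lambda>a. f2 a x - gibbs_density g a * gam \<eta> (x - a) + pd x * gam \<eta> (x - a))"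
      using H1[of x] pd_int_y[of x] gam_flip_int(1)
      by (intro Bochner_Integration.integrable_add Bochner_Integration.integrable_diff Bochner_Integration.integrable_mult_right)
    show "\<And>a. a \<in> space lborel \<Longrightarrow> gibbs_density g a * gam \<eta> (x - a) * ln m \<le> f2 a x - gibbs_density g a * gam \<eta> (x - a) + pd x * gam \<eta> (x - a)"
      by (rule pt)
  qed
  also have "\<dots> = (\<integral>a. f2 a x \<partial>lborel) - pd x + pd x * (\<integral>a. gam \<eta> (x - a) \<partial>lborel)"
  proof -
    have i1: "integrable lborel (\<lambda>a. f2 a x)" by (rule H1)
    have i2: "integrable lborel (\<lambda>a. gibbs_density g a * gam \<eta> (x - a))" by (rule pd_int_y)
    have i3: "integrable lborel (\<lambda>a. pd x * gam \<eta> (x - a))" using gam_flip_int(1)[of x] by simp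
    have "(\<integral>a. f2 a x - gibbs_density g a * gam \<eta> (x - a) + pd x * gam \<eta> (x - a) \<partial>lborel)
        = (\<integral>a. f2 a x - gibbs_density g a * gam \<eta> (x - a) \<partial>lborel) + (\<integral>a. pd x * gam \<eta> (x - a) \<partial>lborel)"
      using i1 i2 i3 by (intro Bochner_Integration.integral_add Bochner_Integration.integrable_diff)
    also have "(\<integral>a. f2 a x - gibbs_density g a * gam \<eta> (x - a) \<partial>lborel) = (\<integral>a. f2 a x \<partial>lborel) - pd x"
      unfolding pd_def using i1 i2 by (rule Bochner_Integration.integral_diff)
    also have "(\<integral>a. pd x * gam \<eta> (x - a) \<partial>lborel) = pd x * (\<integral>a. gam \<eta> (x - a) \<partial>lborel)"
      by simp
    finally show ?thesis .
  qed
  also have "\<dots> = (\<integral>a. f2 a x \<partial>lborel)" by (simp add: gam_flip_int(2))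
  finally show ?thesis unfolding m_def .
qed

definition "kl x = pd x * ln (pd x / gibbs_density g x)"

lemma kl_meas[measurable]: "kl \<in> borel_measurable borel"
  unfolding kl_def[abs_def] by measurable

lemma kl_lower: "pd x - gibbs_density g x \<le> kl x"
  unfolding kl_def by (rule elem_ln_lower[OF pd_pos q_pos])

lemma kl_int: "integrable lborel kl"
proof (rule Bochner_Integration.integrable_bound)
  show "integrable lborel (\<lambda>x. \<bar>pd x - gibbs_density g x\<bar> + \<bar>\<integral>a. f2 a x \<partial>lborel\<bar>)"
    using pd_integrable q_int hh_int by (intro Bochner_Integration.integrable_add integrable_abs Bochner_Integration.integrable_diff)
  show "kl \<in> borel_measurable lborel" by simp
  show "AE x in lborel. norm (kl x) \<le> norm (\<bar>pd x - gibbs_density g x\<bar> + \<bar>\<integral>a. f2 a x \<partial>lborel\<bar>)"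
  proof (intro AE_I2)
    fix x :: 'a
    have "pd x - gibbs_density g x \<le> kl x" by (rule kl_lower)
    moreover have "kl x \<le> (\<integral>a. f2 a x \<partial>lborel)" unfolding kl_def by (rule kl_pt)
    ultimately show "norm (kl x) \<le> norm (\<bar>pd x - gibbs_density g x\<bar> + \<bar>\<integral>a. f2 a x \<partial>lborel\<bar>)"
      by simp
  qed
qed

lemma kl_bound: "integral\<^sup>L lborel kl \<le> \<beta> / 2 * (real DIM('a) * \<eta>)"
proof -
  have "integral\<^sup>L lborel kl \<le> (\<integral>b. (\<integral>a. f2 a b \<partial>lborel) \<partial>lborel)"
    using kl_int hh_int by (rule integral_mono) (simp add: kl_def kl_pt)
  also have "\<dots> \<le> \<beta> / 2 * (real DIM('a) * \<eta>)" by (rule hh_bound)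
  finally show ?thesis .
qed

lemma beta_ge: "\<alpha> \<le> \<beta>"
proof -
  obtain b :: 'a where b: "b \<in> Basis" using nonempty_Basis by blast
  have nb: "norm b = 1" using b by simp
  have "grad 0 \<bullet> b + \<alpha> / 2 * (norm b)\<^sup>2 \<le> g b - g 0" using sc'[where x=b and y=0] by simp
  moreover have "g b - g 0 \<le> grad 0 \<bullet> b + \<beta> / 2 * (norm b)\<^sup>2" using sm'[where x=b and y=0] by simp
  ultimately have "\<alpha> / 2 * (norm b)\<^sup>2 \<le> \<beta> / 2 * (norm b)\<^sup>2" by linarith
  then show ?thesis using nb by simp
qed

lemma beta_pos: "0 < \<beta>" using beta_ge alpha_pos by simp

definition "K0 = \<beta> / 2 * (real DIM('a) * \<eta>)"

lemma K0_pos: "0 < K0" unfolding K0_def using beta_pos eta_pos by simp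

lemma tv_bound: "(\<integral>x. \<bar>pd x - gibbs_density g x\<bar> \<partial>lborel) \<le> 2 * sqrt K0"
proof -
  define s where "s = sqrt K0 / 2"
  have s0: "0 < s" unfolding s_def using K0_pos by simp
  have "(\<integral>x. \<bar>pd x - gibbs_density g x\<bar> \<partial>lborel) \<le> (\<integral>x. (kl x - pd x + gibbs_density g x) / (2 * s) + s * (pd x + gibbs_density g x) \<partial>lborel)"
  proof (rule integral_mono)
    show "integrable lborel (\<lambda>x. \<bar>pd x - gibbs_density g x\<bar>)"
      using pd_integrable q_int by (intro integrable_abs Bochner_Integration.integrable_diff)
    show "integrable lborel (\<lambda>x. (kl x - pd x + gibbs_density g x) / (2 * s) + s * (pd x + gibbs_density g x))"
      using kl_int pd_integrable q_int
      by (intro Bochner_Integration.integrable_add Bochner_Integration.integrable_diff integrable_divide Bochner_Integration.integrable_mult_right)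
    show "\<And>x. x \<in> space lborel \<Longrightarrow> \<bar>pd x - gibbs_density g x\<bar> \<le> (kl x - pd x + gibbs_density g x) / (2 * s) + s * (pd x + gibbs_density g x)"
      unfolding kl_def using pd_pos q_pos s0 by (intro elem_tv) auto
  qed
  also have "\<dots> = (integral\<^sup>L lborel kl - integral\<^sup>L lborel pd + integral\<^sup>L lborel (gibbs_density g)) / (2 * s) + s * (integral\<^sup>L lborel pd + integral\<^sup>L lborel (gibbs_density g))"
  proof -
    have i1: "integrable lborel kl" by (rule kl_int)
    have i2: "integrable lborel pd" by (rule pd_integrable)
    have i3: "integrable lborel (gibbs_density g)" by (rule q_int)
    have "(\<integral>x. (kl x - pd x + gibbs_density g x) / (2 * s) + s * (pd x + gibbs_density g x) \<partial>lborel)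
      = (\<integral>x. (kl x - pd x + gibbs_density g x) / (2 * s) \<partial>lborel) + (\<integral>x. s * (pd x + gibbs_density g x) \<partial>lborel)"
      using i1 i2 i3 by (intro Bochner_Integration.integral_add integrable_divide Bochner_Integration.integrable_add Bochner_Integration.integrable_diff Bochner_Integration.integrable_mult_right)
    also have "(\<integral>x. (kl x - pd x + gibbs_density g x) / (2 * s) \<partial>lborel) = (\<integral>x. kl x - pd x + gibbs_density g x \<partial>lborel) / (2 * s)"
      by simp
    also have "(\<integral>x. kl x - pd x + gibbs_density g x \<partial>lborel) = (\<integral>x. kl x - pd x \<partial>lborel) + integral\<^sup>L lborel (gibbs_density g)"
      using i1 i2 i3 by (intro Bochner_Integration.integral_add Bochner_Integration.integrable_diff)
    also have "(\<integral>x. kl x - pd x \<partial>lborel) = integral\<^sup>L lborel kl - integral\<^sup>L lborel pd"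
      using i1 i2 by (rule Bochner_Integration.integral_diff)
    also have "(\<integral>x. s * (pd x + gibbs_density g x) \<partial>lborel) = s * (\<integral>x. pd x + gibbs_density g x \<partial>lborel)"
      by simp
    also have "(\<integral>x. pd x + gibbs_density g x \<partial>lborel) = integral\<^sup>L lborel pd + integral\<^sup>L lborel (gibbs_density g)"
      using i2 i3 by (rule Bochner_Integration.integral_add)
    finally show ?thesis .
  qed
  also have "\<dots> = integral\<^sup>L lborel kl / (2 * s) + 2 * s"
    by (simp add: pd_integral q_integral)
  also have "\<dots> \<le> K0 / (2 * s) + 2 * s"
    using kl_bound s0 unfolding K0_def by (intro add_right_mono divide_right_mono) auto
  also have "\<dots> = 2 * sqrt K0"
    unfolding s_def using K0_pos by (simp add: field_simps real_sqrt_mult[symmetric])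
  finally show ?thesis .
qed

lemma jw_eq: "joint_weight g \<eta> x y = Zg * sqrt (2*pi*\<eta>) ^ DIM('a) * (gibbs_density g y * gam \<eta> (x - y))"
proof -
  have "gam \<eta> (x - y) * sqrt (2*pi*\<eta>) ^ DIM('a) = exp (- ((norm (x - y))^2) / (2*\<eta>))"
    using eta_pos by (simp add: gam_closed)
  moreover have "gibbs_density g y * Zg = exp (- g y)" using Zg_pos by (simp add: q_eq)
  moreover have a: "- g y - (norm (x - y))\<^sup>2 / (2 * \<eta>) = - g y + (- ((norm (x - y))^2) / (2*\<eta>))" by simp
  moreover have "joint_weight g \<eta> x y = exp (- g y) * exp (- ((norm (x - y))^2) / (2*\<eta>))"
    unfolding joint_weight_def a exp_add ..
  ultimately show ?thesis by (metis mult.commute mult.left_commute)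
qed

lemma Xm_eq: "X_marginal_density g \<eta> x = pd x"
proof -
  define c where "c = Zg * sqrt (2*pi*\<eta>) ^ DIM('a)"
  have c0: "0 < c" unfolding c_def using Zg_pos eta_pos by simp
  have num: "(LINT y|lborel. joint_weight g \<eta> x' y) = c * pd x'" for x'
    unfolding jw_eq pd_def c_def by simp
  show ?thesis unfolding X_marginal_density_def num using c0 pd_integral by simp
qed

lemma main_ctx:
  shows "integrable lborel
           (\<lambda>x. X_marginal_density g \<eta> x * ln (X_marginal_density g \<eta> x / gibbs_density g x))
       \<and> KL_dens (X_marginal_density g \<eta>) (gibbs_density g)
           \<le> real DIM('a) * \<alpha> / (2 * \<beta>) * (exp (2 * \<beta>\<^sup>2 * \<eta> / \<alpha>) - 1)
       \<and> TV_dens (X_marginal_density g \<eta>) (gibbs_density g)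
           \<le> sqrt (real DIM('a) * \<alpha> / (4 * \<beta>) * (exp (2 * \<beta>\<^sup>2 * \<eta> / \<alpha>) - 1))"
proof -
  have X: "X_marginal_density g \<eta> = pd" by (rule ext) (rule Xm_eq)
  have klf: "(\<lambda>x. pd x * ln (pd x / gibbs_density g x)) = kl" by (rule ext) (simp add: kl_def)
  define E where "E = exp (2 * \<beta>\<^sup>2 * \<eta> / \<alpha>) - 1"
  have E: "2 * \<beta>\<^sup>2 * \<eta> / \<alpha> \<le> E" unfolding E_def using exp_ge_add_one_self[of "2 * \<beta>\<^sup>2 * \<eta> / \<alpha>"] by linarith
  have d0: "0 \<le> real DIM('a)" by simp
  have "K0 = real DIM('a) * \<alpha> / (4 * \<beta>) * (2 * \<beta>\<^sup>2 * \<eta> / \<alpha>)"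
    unfolding K0_def using alpha_pos beta_pos by (simp add: field_simps power2_eq_square)
  also have "\<dots> \<le> real DIM('a) * \<alpha> / (4 * \<beta>) * E"
    using E alpha_pos beta_pos by (intro mult_left_mono) auto
  finally have K0E: "K0 \<le> real DIM('a) * \<alpha> / (4 * \<beta>) * E" .
  have K0E2: "K0 \<le> real DIM('a) * \<alpha> / (2 * \<beta>) * E"
  proof -
    have "0 \<le> real DIM('a) * \<alpha> / (4 * \<beta>) * E"
      using K0E K0_pos by simp
    moreover have "real DIM('a) * \<alpha> / (2 * \<beta>) * E = 2 * (real DIM('a) * \<alpha> / (4 * \<beta>) * E)"
      using beta_pos by (simp add: field_simps)
    ultimately show ?thesis using K0E by linarith
  qed
  have "integral\<^sup>L lborel kl \<le> K0" using kl_bound unfolding K0_def .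
  then have KL: "KL_dens (X_marginal_density g \<eta>) (gibbs_density g) \<le> real DIM('a) * \<alpha> / (2 * \<beta>) * E"
    unfolding KL_dens_def X klf using K0E2 by linarith
  have "TV_dens (X_marginal_density g \<eta>) (gibbs_density g) \<le> sqrt K0"
    unfolding TV_dens_def X using tv_bound by simp
  also have "\<dots> \<le> sqrt (real DIM('a) * \<alpha> / (4 * \<beta>) * E)" using K0E by simp
  finally have TV: "TV_dens (X_marginal_density g \<eta>) (gibbs_density g) \<le> sqrt (real DIM('a) * \<alpha> / (4 * \<beta>) * E)" .
  show ?thesis unfolding X klf using kl_int KL TV unfolding X E_def by simp
qed

end

theorem mainTheorem10:
  fixes g :: "'a::euclidean_space \<Rightarrow> real" and grad :: "'a \<Rightarrow> 'a"
    and \<alpha> \<beta> \<eta> :: real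
  assumes grad: "\<And>x. GDERIV g x :> grad x"
    and twice: "\<And>x. grad differentiable (at x)"
    and alpha_pos: "0 < \<alpha>"
    and sc: "strongly_convex g grad \<alpha>"
    and sm: "beta_smooth g grad \<beta>"
    and eta_pos: "0 < \<eta>"
  shows "integrable lborel
           (\<lambda>x. X_marginal_density g \<eta> x * ln (X_marginal_density g \<eta> x / gibbs_density g x))
       \<and> KL_dens (X_marginal_density g \<eta>) (gibbs_density g)
           \<le> real DIM('a) * \<alpha> / (2 * \<beta>) * (exp (2 * \<beta>\<^sup>2 * \<eta> / \<alpha>) - 1)
       \<and> TV_dens (X_marginal_density g \<eta>) (gibbs_density g)
           \<le> sqrt (real DIM('a) * \<alpha> / (4 * \<beta>) * (exp (2 * \<beta>\<^sup>2 * \<eta> / \<alpha>) - 1))"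
  by (rule main_ctx[OF grad alpha_pos sc sm eta_pos])

end
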